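(* Let $\mathfrak{g}_1,\mathfrak{g}_2$ be $S$-algebras such that $f_i(\mathfrak{g}_i)\subset C^1\mathfrak{g}_i$ for every $f_i\in\mathrm{Der}(\mathfrak{g}_i)$, $i=1,2$. Then $\mathfrak{g}_1\underline{\times}\mathfrak{g}_2$ is characteristically nilpotent and $D(\mathfrak{g}_1\underline{\times}\mathfrak{g}_2)\subset C^1(\mathfrak{g}_1\underline{\times}\mathfrak{g}_2)$ for every derivation $D$ of $\mathfrak{g}_1\underline{\times}\mathfrak{g}_2$.
   Context: All Lie algebras are finite-dimensional, complex, nilpotent and nonabelian. $C^1\mathfrak{g}=[\mathfrak{g},\mathfrak{g}]$. A nilpotent $\mathfrak{g}$ is characteristically nilpotent if $\mathfrak{g}^{[m]}=0$ for some $m$, where $\mathfrak{g}^{[1]}=\{f(Y): f\in\mathrm{Der}(\mathfrak{g}),Y\in\mathfrak{g}\}$ and $\mathfrak{g}^{[k]}=\mathrm{Der}(\mathfrak{g})(\mathfrak{g}^{[k-1]})$. Product by generators: for $\mathfrak{g}_1,\mathfrak{g}_2$ of dimensions $m_1,m_2$ take bases $\{X_1,\dots,X_{m_1}\}$, $\{X'_1,\dots,X'_{m_2}\}$ such that $X_1,\dots,X_{n_1}$ generate $\mathfrak{g}_1$ and $X_{n_1+1},\dots,X_{m_1}$ span $C^1\mathfrak{g}_1$, and similarly for $\mathfrak{g}_2$ with $n_2$ generators. $\mathfrak{g}_1\underline{\times}\mathfrak{g}_2$ is the Lie algebra on $\mathfrak{g}_1\oplus\mathfrak{g}_2\oplus\mathfrak{g}_3$,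 $\mathfrak{g}_3=\langle Z_1,\dots,Z_{n_1n_2}\rangle$, with the brackets of $\mathfrak{g}_1$ and of $\mathfrak{g}_2$, $[X_i,X'_j]=Z_{(i-1)n_2+j}$ for $i\le n_1$, $j\le n_2$, $[X_i,X'_j]=0$ otherwise, and $\mathfrak{g}_3$ central. For $D$ a derivation of $\mathfrak{g}_1\underline{\times}\mathfrak{g}_2$ write $D_{21}=p_2D|_{\mathfrak{g}_1}$ with $p_2$ the projection onto $\mathfrak{g}_2$. A nilpotent Lie algebra $\mathfrak{g}_1$ is an $S$-algebra if for every Lie algebra $\mathfrak{g}_2$ and every derivation $D$ of $\mathfrak{g}_1\underline{\times}\mathfrak{g}_2$ one has $D_{21}(\mathfrak{g}_1)\subset C^1\mathfrak{g}_2$. *)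

theory Defs
  imports Complex_Main "HOL-Library.Function_Algebras"
begin

text \<open>A finite-dimensional complex Lie
algebra is given by its dimension and structure constants with respect to a basis
e_0, ..., e_(dim-1): the coefficient of e_k in [e_i, e_j] is lsc L i j k.\<close>

type_synonym vec = "nat \<Rightarrow> complex"

record lie_sc =
  ldim :: nat
  lsc :: "nat \<Rightarrow> nat \<Rightarrow> nat \<Rightarrow> complex"

definition carrier_L :: "lie_sc \<Rightarrow> vec set" where
  "carrier_L L = {v. \<forall>i. ldim L \<le> i \<longrightarrow> v i = 0}"

definition br :: "lie_sc \<Rightarrow> vec \<Rightarrow> vec \<Rightarrow> vec" where
  "br L x y = (\<lambda>k. if k < ldim L
      then (\<Sum>i<ldim L. \<Sum>j<ldim L. x i * y j * lsc L i j k) else 0)"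

definition smul :: "complex \<Rightarrow> vec \<Rightarrow> vec" where
  "smul a x = (\<lambda>i. a * x i)"

definition unitv :: "nat \<Rightarrow> vec" where
  "unitv k = (\<lambda>i. if i = k then 1 else 0)"

definition cspan :: "vec set \<Rightarrow> vec set" where
  "cspan S = {(\<Sum>u\<in>F. smul (a u) u) | F a. finite F \<and> F \<subseteq> S}"

definition lie_algebra :: "lie_sc \<Rightarrow> bool" where
  "lie_algebra L \<longleftrightarrow>
     (\<forall>x\<in>carrier_L L. br L x x = 0) \<and>
     (\<forall>x\<in>carrier_L L. \<forall>y\<in>carrier_L L. \<forall>z\<in>carrier_L L.
        br L x (br L y z) + br L y (br L z x) + br L z (br L x y) = 0)"

definition C1 :: "lie_sc \<Rightarrow> vec set" where
  "C1 L = cspan {br L x y | x y. x \<in> carrier_L L \<and> y \<in> carrier_L L}"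

fun lcs :: "lie_sc \<Rightarrow> nat \<Rightarrow> vec set" where
  "lcs L 0 = carrier_L L"
| "lcs L (Suc k) = cspan {br L x y | x y. x \<in> carrier_L L \<and> y \<in> lcs L k}"

definition nilpotent_L :: "lie_sc \<Rightarrow> bool" where
  "nilpotent_L L \<longleftrightarrow> (\<exists>k. lcs L k = {0})"

definition nna_lie :: "lie_sc \<Rightarrow> bool" where
  "nna_lie L \<longleftrightarrow> lie_algebra L \<and> nilpotent_L L \<and> C1 L \<noteq> {0}"

text \<open>The basis is adapted with n generators: e_0..e_(n-1) generate and
e_n..e_(dim-1) span C^1 g.\<close>
definition adapted :: "lie_sc \<Rightarrow> nat \<Rightarrow> bool" where
  "adapted L n \<longleftrightarrow> n \<le> ldim L \<and>
     C1 L = cspan {unitv k | k. n \<le> k \<and> k < ldim L}"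

definition derivation :: "lie_sc \<Rightarrow> (vec \<Rightarrow> vec) \<Rightarrow> bool" where
  "derivation L D \<longleftrightarrow>
     (\<forall>x\<in>carrier_L L. D x \<in> carrier_L L) \<and>
     (\<forall>x\<in>carrier_L L. \<forall>y\<in>carrier_L L. D (x + y) = D x + D y) \<and>
     (\<forall>a. \<forall>x\<in>carrier_L L. D (smul a x) = smul a (D x)) \<and>
     (\<forall>x\<in>carrier_L L. \<forall>y\<in>carrier_L L. D (br L x y) = br L (D x) y + br L x (D y))"

fun der_seq :: "lie_sc \<Rightarrow> nat \<Rightarrow> vec set" where
  "der_seq L 0 = carrier_L L"
| "der_seq L (Suc k) = {f y | f y. derivation L f \<and> y \<in> der_seq L k}"

definition char_nilpotent :: "lie_sc \<Rightarrow> bool" where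
  "char_nilpotent L \<longleftrightarrow> nilpotent_L L \<and> (\<exists>m\<ge>1. der_seq L m = {0})"

text \<open>Layout of the basis of the product: indices 0..m1-1 are
X_1..X_m1 of g1, indices m1..m1+m2-1 are X'_1..X'_m2 of g2, and index m1+m2+(i*n2+j)
is Z_((i-1)n2+j) in 1-based notation, i.e. [X_(i+1), X'_(j+1)] for i<n1, j<n2.\<close>
definition prod_gen :: "lie_sc \<Rightarrow> nat \<Rightarrow> lie_sc \<Rightarrow> nat \<Rightarrow> lie_sc" where
  "prod_gen L1 n1 L2 n2 = (let m1 = ldim L1; m2 = ldim L2 in
     \<lparr> ldim = m1 + m2 + n1 * n2,
       lsc = (\<lambda>i j k.
         if i < m1 \<and> j < m1 \<and> k < m1 then lsc L1 i j k
         else if m1 \<le> i \<and> i < m1 + m2 \<and> m1 \<le> j \<and> j < m1 + m2 \<and> m1 \<le> k \<and> k < m1 + m2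
           then lsc L2 (i - m1) (j - m1) (k - m1)
         else if i < n1 \<and> m1 \<le> j \<and> j < m1 + n2 \<and> k = m1 + m2 + i * n2 + (j - m1) then 1
         else if j < n1 \<and> m1 \<le> i \<and> i < m1 + n2 \<and> k = m1 + m2 + j * n2 + (i - m1) then -1
         else 0) \<rparr>)"

definition proj2 :: "lie_sc \<Rightarrow> lie_sc \<Rightarrow> vec \<Rightarrow> vec" where
  "proj2 L1 L2 v = (\<lambda>i. if i < ldim L2 then v (ldim L1 + i) else 0)"

text \<open>S-algebra: for every Lie algebra g2 (with adapted basis) and every derivation D of
the product, D_21(g1) is contained in C^1 g2. (g1 is embedded in the product as the
vectors supported on the first ldim L1 coordinates, i.e. carrier_L L1 itself.)\<close>
definition S_algebra :: "lie_sc \<Rightarrow> nat \<Rightarrow> bool" where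
  "S_algebra L1 n1 \<longleftrightarrow> nna_lie L1 \<and> adapted L1 n1 \<and>
     (\<forall>L2 n2. nna_lie L2 \<and> adapted L2 n2 \<longrightarrow>
        (\<forall>D. derivation (prod_gen L1 n1 L2 n2) D \<longrightarrow>
           (\<forall>x\<in>carrier_L L1. proj2 L1 L2 (D x) \<in> C1 L2)))"

end

theory Submission
  imports Defs
begin

lemma sum_fun_apply: "(sum f F) i = (\<Sum>u\<in>F. f u i)" for f :: "'b \<Rightarrow> vec"
  by (induction F rule: infinite_finite_induct) auto

lemma smul_apply[simp]: "smul a x i = a * x i" by (simp add: smul_def)

lemma smul_0[simp]: "smul 0 x = 0" by (auto simp: smul_def fun_eq_iff)
lemma smul_1[simp]: "smul 1 x = x" by (auto simp: smul_def fun_eq_iff)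
lemma smul_zero[simp]: "smul a 0 = 0" by (auto simp: smul_def fun_eq_iff)

definition subsp :: "vec set \<Rightarrow> bool" where
  "subsp V \<longleftrightarrow> 0 \<in> V \<and> (\<forall>x\<in>V. \<forall>y\<in>V. x + y \<in> V) \<and> (\<forall>a. \<forall>x\<in>V. smul a x \<in> V)"

lemma subsp_0: "subsp V \<Longrightarrow> 0 \<in> V" by (simp add: subsp_def)
lemma subsp_add: "subsp V \<Longrightarrow> x \<in> V \<Longrightarrow> y \<in> V \<Longrightarrow> x + y \<in> V" by (simp add: subsp_def)
lemma subsp_smul: "subsp V \<Longrightarrow> x \<in> V \<Longrightarrow> smul a x \<in> V" by (simp add: subsp_def)
lemma subsp_neg: "subsp V \<Longrightarrow> x \<in> V \<Longrightarrow> - x \<in> V"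
proof -
  assume "subsp V" "x \<in> V"
  then have "smul (-1) x \<in> V" by (rule subsp_smul)
  moreover have "smul (-1) x = - x" by (auto simp: fun_eq_iff)
  ultimately show ?thesis by simp
qed
lemma subsp_diff: "subsp V \<Longrightarrow> x \<in> V \<Longrightarrow> y \<in> V \<Longrightarrow> x - y \<in> V"
  using subsp_add[of V x "- y"] subsp_neg[of V y] by simp

lemma subsp_sum: "subsp V \<Longrightarrow> (\<And>u. u \<in> F \<Longrightarrow> f u \<in> V) \<Longrightarrow> sum f F \<in> V"
  by (induction F rule: infinite_finite_induct) (auto simp: subsp_0 subsp_add)

lemma smul_sum: "smul c (sum f F) = (\<Sum>u\<in>F. smul c (f u))"
  by (auto simp: fun_eq_iff sum_fun_apply sum_distrib_left)

lemma smul_add_left: "smul (a + b) u = smul a u + smul b u"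
  by (auto simp: fun_eq_iff algebra_simps)
lemma smul_add_right: "smul a (u + v) = smul a u + smul a v"
  by (auto simp: fun_eq_iff algebra_simps)
lemma smul_smul: "smul a (smul b u) = smul (a * b) u"
  by (auto simp: fun_eq_iff algebra_simps)

lemma cspan_sum_ext:
  assumes "finite F" "F \<subseteq> G" "finite G"
  shows "(\<Sum>u\<in>F. smul (a u) u) = (\<Sum>u\<in>G. smul (if u \<in> F then a u else 0) u)"
proof -
  have "(\<Sum>u\<in>G. smul (if u \<in> F then a u else 0) u) = (\<Sum>u\<in>F. smul (if u \<in> F then a u else 0) u)"
    by (rule sum.mono_neutral_right) (use assms in auto)
  also have "\<dots> = (\<Sum>u\<in>F. smul (a u) u)" by simp
  finally show ?thesis by simp
qed

lemma subsp_cspan: "subsp (cspan S)"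
  unfolding subsp_def
proof (intro conjI ballI allI)
  show "0 \<in> cspan S" unfolding cspan_def
    by (rule CollectI, rule exI[of _ "{}"], auto)
next
  fix x y assume "x \<in> cspan S" "y \<in> cspan S"
  then obtain F a G b where F: "x = (\<Sum>u\<in>F. smul (a u) u)" "finite F" "F \<subseteq> S"
    and G: "y = (\<Sum>u\<in>G. smul (b u) u)" "finite G" "G \<subseteq> S"
    unfolding cspan_def by blast
  let ?H = "F \<union> G"
  have "x = (\<Sum>u\<in>?H. smul (if u \<in> F then a u else 0) u)"
    using F cspan_sum_ext[of F ?H a] G by auto
  moreover have "y = (\<Sum>u\<in>?H. smul (if u \<in> G then b u else 0) u)"
    using G cspan_sum_ext[of G ?H b] F by auto
  ultimately have "x + y = (\<Sum>u\<in>?H. smul ((if u \<in> F then a u else 0) + (if u \<in> G then b u else 0)) u)"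
    by (simp add: smul_add_left sum.distrib)
  then have "\<exists>H c. x + y = (\<Sum>u\<in>H. smul (c u) u) \<and> finite H \<and> H \<subseteq> S"
    using F G by (intro exI[of _ ?H] exI[of _ "\<lambda>u. (if u \<in> F then a u else 0) + (if u \<in> G then b u else 0)"]) blast
  then show "x + y \<in> cspan S" by (simp add: cspan_def)
next
  fix c x assume "x \<in> cspan S"
  then obtain F a where F: "x = (\<Sum>u\<in>F. smul (a u) u)" "finite F" "F \<subseteq> S"
    unfolding cspan_def by blast
  then have "smul c x = (\<Sum>u\<in>F. smul (c * a u) u)" by (simp add: smul_sum smul_smul)
  then have "\<exists>H e. smul c x = (\<Sum>u\<in>H. smul (e u) u) \<and> finite H \<and> H \<subseteq> S"
    using F by (intro exI[of _ F] exI[of _ "\<lambda>u. c * a u"]) blast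
  then show "smul c x \<in> cspan S" by (simp add: cspan_def)
qed

lemma cspan_base: "u \<in> S \<Longrightarrow> u \<in> cspan S"
  unfolding cspan_def
  by (rule CollectI, rule exI[of _ "{u}"], rule exI[of _ "\<lambda>_. 1"]) auto

lemma cspan_least:
  assumes "subsp V" "S \<subseteq> V" shows "cspan S \<subseteq> V"
proof
  fix x assume "x \<in> cspan S"
  then obtain F a where F: "x = (\<Sum>u\<in>F. smul (a u) u)" "finite F" "F \<subseteq> S"
    unfolding cspan_def by blast
  show "x \<in> V" unfolding F(1) by (rule subsp_sum[OF assms(1)]) (use F assms in \<open>auto intro: subsp_smul\<close>)
qed

lemma cspan_mono: "S \<subseteq> T \<Longrightarrow> cspan S \<subseteq> cspan T"
  by (rule cspan_least[OF subsp_cspan]) (auto intro: cspan_base)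

lemma lin_sum:
  assumes V: "subsp V" and add: "\<And>x y. x \<in> V \<Longrightarrow> y \<in> V \<Longrightarrow> f (x + y) = f x + f y"
    and hom: "\<And>a x. x \<in> V \<Longrightarrow> f (smul a x) = smul a (f x)"
    and F: "finite F" "\<And>u. u \<in> F \<Longrightarrow> g u \<in> V"
  shows "f (sum g F) = (\<Sum>u\<in>F. f (g u))"
  using F
proof (induction F rule: finite_induct)
  case empty
  have "f (smul 0 0) = smul 0 (f 0)" using hom subsp_0[OF V] by blast
  then have "f 0 = 0" by (simp only: smul_0)
  then show ?case by (simp only: sum.empty)
next
  case (insert u F)
  have gF: "sum g F \<in> V" using insert by (intro subsp_sum[OF V]) auto
  have "f (sum g (insert u F)) = f (g u + sum g F)" using sum.insert[OF insert(1,2), of g] by metis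
  also have "\<dots> = f (g u) + f (sum g F)" using add[OF _ gF] insert.prems by blast
  also have "\<dots> = f (g u) + (\<Sum>u\<in>F. f (g u))" using insert by simp
  also have "\<dots> = (\<Sum>u\<in>insert u F. f (g u))" using sum.insert[OF insert(1,2), of "\<lambda>u. f (g u)"] by metis
  finally show ?case .
qed

lemma lin_cspan:
  assumes V: "subsp V" and add: "\<And>x y. x \<in> V \<Longrightarrow> y \<in> V \<Longrightarrow> f (x + y) = f x + f y"
    and hom: "\<And>a x. x \<in> V \<Longrightarrow> f (smul a x) = smul a (f x)"
    and S: "S \<subseteq> V" and W: "subsp W" and img: "\<And>u. u \<in> S \<Longrightarrow> f u \<in> W"
    and x: "x \<in> cspan S"
  shows "f x \<in> W"
proof -
  obtain F a where F: "x = (\<Sum>u\<in>F. smul (a u) u)" "finite F" "F \<subseteq> S"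
    using x unfolding cspan_def by blast
  have "f x = (\<Sum>u\<in>F. f (smul (a u) u))"
    unfolding F(1) by (rule lin_sum[OF V add hom F(2)]) (use F S V in \<open>auto intro: subsp_smul\<close>)
  also have "\<dots> = (\<Sum>u\<in>F. smul (a u) (f u))" using F S by (intro sum.cong) (auto intro!: hom)
  also have "\<dots> \<in> W" by (rule subsp_sum[OF W]) (use F img W in \<open>auto intro: subsp_smul\<close>)
  finally show ?thesis .
qed

lemma subsp_carrier: "subsp (carrier_L L)"
  by (auto simp: subsp_def carrier_L_def)

lemma subsp_UNIV: "subsp UNIV" by (simp add: subsp_def)


lemma br_carrier: "br L x y \<in> carrier_L L"
  by (simp add: br_def carrier_L_def)

lemma br_add_left: "br L (x + y) z = br L x z + br L y z"
  by (auto simp: br_def fun_eq_iff algebra_simps sum.distrib)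
lemma br_add_right: "br L x (y + z) = br L x y + br L x z"
  by (auto simp: br_def fun_eq_iff algebra_simps sum.distrib)
lemma br_smul_left: "br L (smul a x) y = smul a (br L x y)"
  by (auto simp: br_def fun_eq_iff algebra_simps sum_distrib_left)
lemma br_smul_right: "br L x (smul a y) = smul a (br L x y)"
  by (auto simp: br_def fun_eq_iff algebra_simps sum_distrib_left)
lemma br_zero_left[simp]: "br L 0 y = 0"
  by (auto simp: br_def fun_eq_iff)
lemma br_zero_right[simp]: "br L x 0 = 0"
  by (auto simp: br_def fun_eq_iff)

lemma br_anti:
  assumes "lie_algebra L" "x \<in> carrier_L L" "y \<in> carrier_L L"
  shows "br L y x = - br L x y"
proof -
  have c: "x + y \<in> carrier_L L" using assms subsp_add[OF subsp_carrier] by blast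
  have "0 = br L (x + y) (x + y)" using assms(1) c by (simp add: lie_algebra_def)
  also have "\<dots> = br L x x + br L x y + br L y x + br L y y"
    by (simp add: br_add_left br_add_right add.assoc)
  also have "\<dots> = br L x y + br L y x" using assms by (simp add: lie_algebra_def)
  finally show ?thesis by (simp add: eq_neg_iff_add_eq_0 add.commute)
qed

lemma subsp_lcs: "subsp (lcs L k)"
  by (cases k) (auto simp: subsp_carrier subsp_cspan)

lemma lcs_Suc_sub: "lcs L (Suc k) \<subseteq> lcs L k"
proof (induction k)
  case 0
  show ?case by (simp, rule cspan_least[OF subsp_carrier]) (auto simp: br_carrier)
next
  case (Suc k)
  show ?case using Suc by (simp only: lcs.simps, intro cspan_mono) blast
qed

lemma lcs_mono: "i \<le> j \<Longrightarrow> lcs L j \<subseteq> lcs L i"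
proof (induction j)
  case 0 then show ?case by simp
next
  case (Suc j)
  then show ?case using lcs_Suc_sub[of L j] by (cases "i = Suc j") auto
qed

lemma lcs_carrier: "lcs L k \<subseteq> carrier_L L"
  using lcs_mono[of 0 k L] by simp

lemma lcs_br: "x \<in> carrier_L L \<Longrightarrow> y \<in> lcs L k \<Longrightarrow> br L x y \<in> lcs L (Suc k)"
  by (simp, rule cspan_base) blast

lemma C1_lcs: "C1 L = lcs L 1"
  by (simp add: C1_def)

lemma lcs_bracket:
  assumes L: "lie_algebra L"
  shows "x \<in> lcs L i \<Longrightarrow> y \<in> lcs L j \<Longrightarrow> br L x y \<in> lcs L (i + j + 1)"
proof (induction i arbitrary: j x y)
  case 0
  then show ?case using lcs_br[of x L y j] by simp
next
  case (Suc i)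
  have xS: "x \<in> cspan {br L a b |a b. a \<in> carrier_L L \<and> b \<in> lcs L i}" using Suc.prems by simp
  show ?case
  proof (rule lin_cspan[OF subsp_UNIV _ _ _ subsp_lcs _ xS, where f = "\<lambda>x. br L x y"])
    show "\<And>x1 x2. br L (x1 + x2) y = br L x1 y + br L x2 y" by (rule br_add_left)
    show "\<And>a x. br L (smul a x) y = smul a (br L x y)" by (rule br_smul_left)
  next
    fix u assume "u \<in> {br L a b |a b. a \<in> carrier_L L \<and> b \<in> lcs L i}"
    then obtain a b where u: "u = br L a b" and a: "a \<in> carrier_L L" and b: "b \<in> lcs L i" by blast
    have bc: "b \<in> carrier_L L" using b lcs_carrier by blast
    have yc: "y \<in> carrier_L L" using Suc.prems lcs_carrier by blast
    have jac: "br L y (br L a b) + br L a (br L b y) + br L b (br L y a) = 0"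
      using L a bc yc by (simp add: lie_algebra_def)
    have "br L u y = - br L y u" using br_anti[OF L yc] u br_carrier by simp
    also have "\<dots> = br L a (br L b y) + br L b (br L y a)"
    proof -
      have g: "X = - (A + B)" if "X + A + B = 0" for X A B :: vec
        using that by (metis add.assoc eq_neg_iff_add_eq_0)
      show ?thesis using g[OF jac] u by simp
    qed
    finally have eq: "br L u y = br L a (br L b y) + br L b (br L y a)" .
    have 1: "br L b y \<in> lcs L (i + j + 1)" using Suc.IH[OF b Suc.prems(2)] .
    have 2: "br L a (br L b y) \<in> lcs L (Suc i + j + 1)" using lcs_br[OF a 1] by simp
    have "br L a y \<in> lcs L (Suc j)" using lcs_br[OF a Suc.prems(2)] .
    then have "- br L a y \<in> lcs L (Suc j)" by (rule subsp_neg[OF subsp_lcs])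
    then have "br L y a \<in> lcs L (Suc j)" by (simp only: br_anti[OF L a yc])
    from Suc.IH[OF b this] have 3: "br L b (br L y a) \<in> lcs L (Suc i + j + 1)" by simp
    show "br L u y \<in> lcs L (Suc i + j + 1)" unfolding eq by (rule subsp_add[OF subsp_lcs 2 3])
  qed auto
qed

lemma deriv_lcs:
  assumes L: "lie_algebra L" and D: "derivation L D" and D1: "D ` carrier_L L \<subseteq> lcs L 1"
  shows "x \<in> lcs L k \<Longrightarrow> D x \<in> lcs L (Suc k)"
proof (induction k arbitrary: x)
  case 0
  then show ?case using D1 by auto
next
  case (Suc k)
  have xS: "x \<in> cspan {br L a b |a b. a \<in> carrier_L L \<and> b \<in> lcs L k}" using Suc.prems by simp
  show ?case
  proof (rule lin_cspan[OF subsp_carrier _ _ _ subsp_lcs _ xS, where f = D])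
    show "\<And>x y. x \<in> carrier_L L \<Longrightarrow> y \<in> carrier_L L \<Longrightarrow> D (x + y) = D x + D y"
      using D by (simp add: derivation_def)
    show "\<And>a x. x \<in> carrier_L L \<Longrightarrow> D (smul a x) = smul a (D x)"
      using D by (simp add: derivation_def)
    show "{br L a b |a b. a \<in> carrier_L L \<and> b \<in> lcs L k} \<subseteq> carrier_L L"
      using br_carrier by blast
  next
    fix u assume "u \<in> {br L a b |a b. a \<in> carrier_L L \<and> b \<in> lcs L k}"
    then obtain a b where u: "u = br L a b" and a: "a \<in> carrier_L L" and b: "b \<in> lcs L k" by blast
    have bc: "b \<in> carrier_L L" using b lcs_carrier by blast
    have eq: "D u = br L (D a) b + br L a (D b)" using D a bc u by (simp add: derivation_def)
    have "D a \<in> lcs L 1" using D1 a by blast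
    from lcs_bracket[OF L this b] have 1: "br L (D a) b \<in> lcs L (Suc (Suc k))" by simp
    have 2: "br L a (D b) \<in> lcs L (Suc (Suc k))" using lcs_br[OF a Suc.IH[OF b]] .
    show "D u \<in> lcs L (Suc (Suc k))" unfolding eq by (rule subsp_add[OF subsp_lcs 1 2])
  qed
qed

lemma derivation_zero: "derivation L (\<lambda>_. 0)"
  by (simp add: derivation_def carrier_L_def)

lemma der_seq_zero: "0 \<in> der_seq L k"
proof (induction k)
  case 0 then show ?case by (simp add: carrier_L_def)
next
  case (Suc k)
  have "\<exists>f y. (0::vec) = f y \<and> derivation L f \<and> y \<in> der_seq L k"
    by (rule exI[of _ "\<lambda>_. 0"], rule exI[of _ 0]) (simp add: derivation_zero Suc.IH)
  then show ?case by (simp only: der_seq.simps mem_Collect_eq)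
qed

lemma der_seq_lcs:
  assumes L: "lie_algebra L" and all: "\<And>D. derivation L D \<Longrightarrow> D ` carrier_L L \<subseteq> C1 L"
  shows "der_seq L k \<subseteq> lcs L k"
proof (induction k)
  case 0 then show ?case by simp
next
  case (Suc k)
  show ?case
  proof
    fix v assume "v \<in> der_seq L (Suc k)"
    then obtain f y where v: "v = f y" and f: "derivation L f" and y: "y \<in> der_seq L k" by auto
    have "f ` carrier_L L \<subseteq> lcs L 1" using all[OF f] C1_lcs by simp
    from deriv_lcs[OF L f this] y Suc.IH show "v \<in> lcs L (Suc k)" using v by blast
  qed
qed

lemma char_nilp_crit:
  assumes L: "lie_algebra L" and N: "nilpotent_L L"
    and all: "\<And>D. derivation L D \<Longrightarrow> D ` carrier_L L \<subseteq> C1 L"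
  shows "char_nilpotent L"
proof -
  obtain K where K: "lcs L K = {0}" using N by (auto simp: nilpotent_L_def)
  have "der_seq L (Suc K) \<subseteq> {0}" using der_seq_lcs[OF L all, of "Suc K"] lcs_Suc_sub[of L K] K by blast
  then have "der_seq L (Suc K) = {0}" using der_seq_zero[of L "Suc K"] by blast
  then show ?thesis using N by (auto simp: char_nilpotent_def intro!: exI[of _ "Suc K"])
qed


definition pA :: "lie_sc \<Rightarrow> vec \<Rightarrow> vec" where
  "pA L v = (\<lambda>k. if k < ldim L then v k else 0)"
definition e2 :: "lie_sc \<Rightarrow> lie_sc \<Rightarrow> vec \<Rightarrow> vec" where
  "e2 L1 L2 b = (\<lambda>k. if ldim L1 \<le> k \<and> k < ldim L1 + ldim L2 then b (k - ldim L1) else 0)"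
definition p3 :: "lie_sc \<Rightarrow> lie_sc \<Rightarrow> nat \<Rightarrow> nat \<Rightarrow> vec \<Rightarrow> vec" where
  "p3 L1 L2 n1 n2 v = (\<lambda>t. if t < n1 * n2 then v (ldim L1 + ldim L2 + t) else 0)"
definition e3 :: "lie_sc \<Rightarrow> lie_sc \<Rightarrow> nat \<Rightarrow> nat \<Rightarrow> vec \<Rightarrow> vec" where
  "e3 L1 L2 n1 n2 c = (\<lambda>k. if ldim L1 + ldim L2 \<le> k \<and> k < ldim L1 + ldim L2 + n1 * n2
      then c (k - ldim L1 - ldim L2) else 0)"
definition Zb :: "nat \<Rightarrow> nat \<Rightarrow> vec \<Rightarrow> vec \<Rightarrow> vec" where
  "Zb n1 n2 a b = (\<lambda>t. if t < n1 * n2 then a (t div n2) * b (t mod n2) else 0)"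

lemma ldim_prod: "ldim (prod_gen L1 n1 L2 n2) = ldim L1 + ldim L2 + n1 * n2"
  by (simp add: prod_gen_def Let_def)

lemma sum_lt_restrict:
  fixes N :: nat
  assumes "m \<le> N" "\<And>i. m \<le> i \<Longrightarrow> i < N \<Longrightarrow> f i = 0"
  shows "sum f {..<N} = sum f {..<m}"
proof (rule sum.mono_neutral_right)
  show "finite {..<N}" by simp
  show "{..<m} \<subseteq> {..<N}" using assms(1) by auto
  show "\<forall>i\<in>{..<N} - {..<m}. f i = 0" using assms(2) by auto
qed

lemma sum_shift_restrict:
  fixes f :: "nat \<Rightarrow> 'a::comm_monoid_add"
  assumes "a + m \<le> N" "\<And>i. i < N \<Longrightarrow> (i < a \<or> a + m \<le> i) \<Longrightarrow> f i = 0"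
  shows "sum f {..<N} = (\<Sum>i<m. f (a + i))"
proof -
  have "sum f {..<N} = sum f {a..<a+m}"
    by (rule sum.mono_neutral_right) (use assms in auto)
  also have "\<dots> = sum f {0 + a..<m + a}" by (simp add: add.commute)
  also have "\<dots> = (\<Sum>i\<in>{0..<m}. f (i + a))" by (rule sum.shift_bounds_nat_ivl)
  finally show ?thesis by (simp add: add.commute atLeast0LessThan)
qed

lemma dsum_shift:
  fixes g :: "nat \<Rightarrow> nat \<Rightarrow> complex"
  assumes "a + m \<le> N"
  shows "(\<Sum>i<N. \<Sum>j<N. if a \<le> i \<and> i < a + m then if a \<le> j \<and> j < a + m then g i j else 0 else 0)
    = (\<Sum>i<m. \<Sum>j<m. g (a + i) (a + j))"
proof -
  have "(\<Sum>i<N. \<Sum>j<N. if a \<le> i \<and> i < a + m then if a \<le> j \<and> j < a + m then g i j else 0 else 0)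
     = (\<Sum>i<m. \<Sum>j<N. if a \<le> a + i \<and> a + i < a + m then if a \<le> j \<and> j < a + m then g (a + i) j else 0 else 0)"
    by (rule sum_shift_restrict[OF assms]) auto
  also have "\<dots> = (\<Sum>i<m. \<Sum>j<m. g (a + i) (a + j))"
  proof (rule sum.cong[OF refl])
    fix i assume "i \<in> {..<m}"
    then have "(\<Sum>j<N. if a \<le> a + i \<and> a + i < a + m then if a \<le> j \<and> j < a + m then g (a + i) j else 0 else 0)
       = (\<Sum>j<N. if a \<le> j \<and> j < a + m then g (a + i) j else 0)" by simp
    also have "\<dots> = (\<Sum>j<m. if a \<le> a + j \<and> a + j < a + m then g (a + i) (a + j) else 0)"
      by (rule sum_shift_restrict[OF assms]) auto
    also have "\<dots> = (\<Sum>j<m. g (a + i) (a + j))" by simp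
    finally show "(\<Sum>j<N. if a \<le> a + i \<and> a + i < a + m then if a \<le> j \<and> j < a + m then g (a + i) j else 0 else 0)
       = (\<Sum>j<m. g (a + i) (a + j))" .
  qed
  finally show ?thesis .
qed

lemma divmod_char:
  fixes n2 :: nat assumes "r < n2"
  shows "(t = i * n2 + r) \<longleftrightarrow> (i = t div n2 \<and> r = t mod n2)"
  using assms by auto

lemma p1_br: "pA L1 (br (prod_gen L1 n1 L2 n2) x y) = br L1 (pA L1 x) (pA L1 y)"
proof (rule ext)
  fix k
  let ?P = "prod_gen L1 n1 L2 n2"
  let ?N = "ldim L1 + ldim L2 + n1 * n2"
  show "pA L1 (br ?P x y) k = br L1 (pA L1 x) (pA L1 y) k"
  proof (cases "k < ldim L1")
    case True
    have l: "lsc ?P i j k = (if i < ldim L1 then if j < ldim L1 then lsc L1 i j k else 0 else 0)" for i j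
      using True by (auto simp: prod_gen_def Let_def)
    have "br ?P x y k = (\<Sum>i<?N. \<Sum>j<?N. x i * y j * lsc ?P i j k)"
      using True by (simp add: br_def ldim_prod)
    also have "\<dots> = (\<Sum>i<?N. \<Sum>j<?N. if i < ldim L1 then if j < ldim L1 then x i * y j * lsc L1 i j k else 0 else 0)"
      by (intro sum.cong refl) (simp add: l)
    also have "\<dots> = (\<Sum>i<ldim L1. \<Sum>j<ldim L1. x i * y j * lsc L1 i j k)"
      by (subst sum_lt_restrict[of "ldim L1"], simp, simp, rule sum.cong, simp,
          subst sum_lt_restrict[of "ldim L1"], auto)
    also have "\<dots> = br L1 (pA L1 x) (pA L1 y) k"
      using True by (simp add: br_def pA_def)
    finally show ?thesis using True by (simp add: pA_def)
  next
    case False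
    then show ?thesis by (simp add: pA_def br_def)
  qed
qed

lemma p2_br: "proj2 L1 L2 (br (prod_gen L1 n1 L2 n2) x y) = br L2 (proj2 L1 L2 x) (proj2 L1 L2 y)"
proof (rule ext)
  fix s
  let ?P = "prod_gen L1 n1 L2 n2"
  let ?N = "ldim L1 + ldim L2 + n1 * n2"
  let ?m1 = "ldim L1"
  let ?m2 = "ldim L2"
  show "proj2 L1 L2 (br ?P x y) s = br L2 (proj2 L1 L2 x) (proj2 L1 L2 y) s"
  proof (cases "s < ?m2")
    case True
    define k where "k = ?m1 + s"
    have l: "lsc ?P i j k = (if ?m1 \<le> i \<and> i < ?m1 + ?m2 then if ?m1 \<le> j \<and> j < ?m1 + ?m2
         then lsc L2 (i - ?m1) (j - ?m1) s else 0 else 0)" for i j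
      using True by (auto simp: prod_gen_def Let_def k_def)
    have "br ?P x y k = (\<Sum>i<?N. \<Sum>j<?N. x i * y j * lsc ?P i j k)"
      using True by (simp add: br_def ldim_prod k_def)
    also have "\<dots> = (\<Sum>i<?N. \<Sum>j<?N. if ?m1 \<le> i \<and> i < ?m1 + ?m2 then if ?m1 \<le> j \<and> j < ?m1 + ?m2
         then x i * y j * lsc L2 (i - ?m1) (j - ?m1) s else 0 else 0)"
      by (intro sum.cong refl) (simp add: l)
    also have "\<dots> = (\<Sum>i<?m2. \<Sum>j<?m2. x (?m1 + i) * y (?m1 + j) * lsc L2 i j s)"
      using dsum_shift[of ?m1 ?m2 ?N "\<lambda>i j. x i * y j * lsc L2 (i - ?m1) (j - ?m1) s"] by simp
    also have "\<dots> = br L2 (proj2 L1 L2 x) (proj2 L1 L2 y) s"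
      using True by (simp add: br_def proj2_def)
    finally show ?thesis using True by (simp add: proj2_def k_def)
  next
    case False
    then show ?thesis by (simp add: proj2_def br_def)
  qed
qed

lemma delta2:
  fixes x y :: vec
  assumes "a < N" "b < N" "a \<noteq> b"
  shows "(\<Sum>i<N. \<Sum>j<N. x i * y j * (if i = a \<and> j = b then 1 else if j = a \<and> i = b then -1 else 0))
       = x a * y b - x b * y a"
proof -
  have e: "x i * y j * (if i = a \<and> j = b then 1 else if j = a \<and> i = b then -1 else 0)
    = (if i = a then (if j = b then x i * y j else 0) else 0) - (if i = b then (if j = a then x i * y j else 0) else 0)" for i j
    using assms by auto
  have dd: "(\<Sum>i<N. \<Sum>j<N. if i = p then if j = q then f i j else 0 else 0) = f p q"
    if "p < N" "q < N" for p q and f :: "nat \<Rightarrow> nat \<Rightarrow> complex"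
  proof -
    have "(\<Sum>j<N. if i = p then if j = q then f i j else 0 else 0) = (if i = p then f i q else 0)" for i
      using that by (cases "i = p") simp_all
    then show ?thesis using that by simp
  qed
  show ?thesis using assms by (simp only: e sum_subtractf dd)
qed

lemma p3_br:
  assumes n1: "n1 \<le> ldim L1" and n2: "n2 \<le> ldim L2"
  shows "p3 L1 L2 n1 n2 (br (prod_gen L1 n1 L2 n2) x y)
     = Zb n1 n2 (pA L1 x) (proj2 L1 L2 y) - Zb n1 n2 (pA L1 y) (proj2 L1 L2 x)"
proof (rule ext)
  fix t
  let ?P = "prod_gen L1 n1 L2 n2"
  let ?N = "ldim L1 + ldim L2 + n1 * n2"
  let ?m1 = "ldim L1"
  let ?m2 = "ldim L2"
  show "p3 L1 L2 n1 n2 (br ?P x y) t = (Zb n1 n2 (pA L1 x) (proj2 L1 L2 y) - Zb n1 n2 (pA L1 y) (proj2 L1 L2 x)) t"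
  proof (cases "t < n1 * n2")
    case True
    define k where "k = ?m1 + ?m2 + t"
    define a where "a = t div n2"
    define b where "b = ?m1 + t mod n2"
    have n2p: "0 < n2" using True by (cases n2) auto
    have a1: "a < n1" using True by (simp add: a_def less_mult_imp_div_less)
    have b1: "t mod n2 < n2" using n2p by simp
    have c3: "(i < n1 \<and> ?m1 \<le> j \<and> j < ?m1 + n2 \<and> k = ?m1 + ?m2 + i * n2 + (j - ?m1))
        \<longleftrightarrow> (i = a \<and> j = b)" for i j
    proof
      assume h: "i < n1 \<and> ?m1 \<le> j \<and> j < ?m1 + n2 \<and> k = ?m1 + ?m2 + i * n2 + (j - ?m1)"
      then have "t = i * n2 + (j - ?m1)" by (simp add: k_def)
      with h divmod_char[of "j - ?m1" n2 t i] have "i = t div n2 \<and> j - ?m1 = t mod n2" by auto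
      then show "i = a \<and> j = b" using h by (auto simp: a_def b_def)
    next
      assume "i = a \<and> j = b"
      then show "i < n1 \<and> ?m1 \<le> j \<and> j < ?m1 + n2 \<and> k = ?m1 + ?m2 + i * n2 + (j - ?m1)"
        using a1 b1 by (auto simp: a_def b_def k_def)
    qed
    have c4: "(j < n1 \<and> ?m1 \<le> i \<and> i < ?m1 + n2 \<and> k = ?m1 + ?m2 + j * n2 + (i - ?m1))
        \<longleftrightarrow> (j = a \<and> i = b)" for i j using c3[of j i] .
    have l: "lsc ?P i j k = (if i = a \<and> j = b then 1 else if j = a \<and> i = b then -1 else 0)" for i j
    proof -
      have "lsc ?P i j k = (if i < n1 \<and> ?m1 \<le> j \<and> j < ?m1 + n2 \<and> k = ?m1 + ?m2 + i * n2 + (j - ?m1) then 1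
        else if j < n1 \<and> ?m1 \<le> i \<and> i < ?m1 + n2 \<and> k = ?m1 + ?m2 + j * n2 + (i - ?m1) then -1 else 0)"
        by (simp add: prod_gen_def Let_def k_def)
      then show ?thesis by (simp only: c3 c4)
    qed
    have aN: "a < ?N" using a1 n1 by simp
    have bN: "b < ?N" using b1 n2 by (simp add: b_def)
    have ab: "a \<noteq> b" using a1 n1 by (simp add: b_def)
    have "br ?P x y k = (\<Sum>i<?N. \<Sum>j<?N. x i * y j * lsc ?P i j k)"
      using True by (simp add: br_def ldim_prod k_def)
    also have "\<dots> = x a * y b - x b * y a" unfolding l by (rule delta2[OF aN bN ab])
    finally have "br ?P x y k = x a * y b - x b * y a" .
    moreover have "(Zb n1 n2 (pA L1 x) (proj2 L1 L2 y) - Zb n1 n2 (pA L1 y) (proj2 L1 L2 x)) t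
       = x a * y b - y a * x b"
      using True a1 b1 n1 n2 by (simp add: Zb_def pA_def proj2_def a_def b_def)
    ultimately show ?thesis using True by (simp add: p3_def k_def)
  next
    case False
    then show ?thesis by (simp add: p3_def Zb_def)
  qed
qed


lemma carrier_P_iff: "v \<in> carrier_L (prod_gen L1 n1 L2 n2) \<longleftrightarrow> (\<forall>i. ldim L1 + ldim L2 + n1 * n2 \<le> i \<longrightarrow> v i = 0)"
  by (simp add: carrier_L_def ldim_prod)

lemma ext_P:
  assumes "v \<in> carrier_L (prod_gen L1 n1 L2 n2)" "w \<in> carrier_L (prod_gen L1 n1 L2 n2)"
    "pA L1 v = pA L1 w" "proj2 L1 L2 v = proj2 L1 L2 w" "p3 L1 L2 n1 n2 v = p3 L1 L2 n1 n2 w"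
  shows "v = w"
proof (rule ext)
  fix k
  consider "k < ldim L1" | "ldim L1 \<le> k \<and> k < ldim L1 + ldim L2"
    | "ldim L1 + ldim L2 \<le> k \<and> k < ldim L1 + ldim L2 + n1 * n2" | "ldim L1 + ldim L2 + n1 * n2 \<le> k"
    by linarith
  then show "v k = w k"
  proof cases
    case 1 then show ?thesis using fun_cong[OF assms(3), of k] by (simp add: pA_def)
  next
    case 2
    then have "ldim L1 + (k - ldim L1) = k" "k - ldim L1 < ldim L2" by auto
    then show ?thesis using fun_cong[OF assms(4), of "k - ldim L1"] by (simp add: proj2_def)
  next
    case 3
    then have "ldim L1 + ldim L2 + (k - ldim L1 - ldim L2) = k" "k - ldim L1 - ldim L2 < n1 * n2" by auto
    then show ?thesis using fun_cong[OF assms(5), of "k - ldim L1 - ldim L2"] by (simp add: p3_def)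
  next
    case 4 then show ?thesis using assms(1,2) by (simp add: carrier_P_iff)
  qed
qed

lemma pA_add[simp]: "pA L (x + y) = pA L x + pA L y" by (auto simp: pA_def fun_eq_iff)
lemma pA_smul[simp]: "pA L (smul a x) = smul a (pA L x)" by (auto simp: pA_def fun_eq_iff)
lemma pA_zero[simp]: "pA L 0 = 0" by (auto simp: pA_def fun_eq_iff)
lemma proj2_add[simp]: "proj2 L1 L2 (x + y) = proj2 L1 L2 x + proj2 L1 L2 y" by (auto simp: proj2_def fun_eq_iff)
lemma proj2_smul[simp]: "proj2 L1 L2 (smul a x) = smul a (proj2 L1 L2 x)" by (auto simp: proj2_def fun_eq_iff)
lemma proj2_zero[simp]: "proj2 L1 L2 0 = 0" by (auto simp: proj2_def fun_eq_iff)
lemma p3_add[simp]: "p3 L1 L2 n1 n2 (x + y) = p3 L1 L2 n1 n2 x + p3 L1 L2 n1 n2 y" by (auto simp: p3_def fun_eq_iff)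
lemma p3_smul[simp]: "p3 L1 L2 n1 n2 (smul a x) = smul a (p3 L1 L2 n1 n2 x)" by (auto simp: p3_def fun_eq_iff)
lemma p3_zero[simp]: "p3 L1 L2 n1 n2 0 = 0" by (auto simp: p3_def fun_eq_iff)
lemma e2_add[simp]: "e2 L1 L2 (x + y) = e2 L1 L2 x + e2 L1 L2 y" by (auto simp: e2_def fun_eq_iff)
lemma e2_smul[simp]: "e2 L1 L2 (smul a x) = smul a (e2 L1 L2 x)" by (auto simp: e2_def fun_eq_iff)

lemma pA_carrier: "pA L v \<in> carrier_L L" by (simp add: pA_def carrier_L_def)
lemma proj2_carrier: "proj2 L1 L2 v \<in> carrier_L L2" by (simp add: proj2_def carrier_L_def)
lemma pA_id: "v \<in> carrier_L L \<Longrightarrow> pA L v = v" by (auto simp: pA_def carrier_L_def fun_eq_iff)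
lemma carrier1_P: "a \<in> carrier_L L1 \<Longrightarrow> a \<in> carrier_L (prod_gen L1 n1 L2 n2)"
  by (simp add: carrier_L_def ldim_prod)
lemma e2_carrier: "e2 L1 L2 b \<in> carrier_L (prod_gen L1 n1 L2 n2)"
  by (simp add: carrier_L_def ldim_prod e2_def)
lemma e3_carrier: "e3 L1 L2 n1 n2 c \<in> carrier_L (prod_gen L1 n1 L2 n2)"
  by (simp add: carrier_L_def ldim_prod e3_def)

lemma proj2_1: "a \<in> carrier_L L1 \<Longrightarrow> proj2 L1 L2 a = 0" by (auto simp: proj2_def carrier_L_def fun_eq_iff)
lemma p3_1: "a \<in> carrier_L L1 \<Longrightarrow> p3 L1 L2 n1 n2 a = 0" by (auto simp: p3_def carrier_L_def fun_eq_iff)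
lemma pA_e2[simp]: "pA L1 (e2 L1 L2 b) = 0" by (auto simp: pA_def e2_def fun_eq_iff)
lemma proj2_e2[simp]: "proj2 L1 L2 (e2 L1 L2 b) = pA L2 b" by (auto simp: proj2_def e2_def pA_def fun_eq_iff)
lemma p3_e2[simp]: "p3 L1 L2 n1 n2 (e2 L1 L2 b) = 0" by (auto simp: p3_def e2_def fun_eq_iff)
lemma pA_e3[simp]: "pA L1 (e3 L1 L2 n1 n2 c) = 0" by (auto simp: pA_def e3_def fun_eq_iff)
lemma proj2_e3[simp]: "proj2 L1 L2 (e3 L1 L2 n1 n2 c) = 0" by (auto simp: proj2_def e3_def fun_eq_iff)
lemma p3_e3[simp]: "p3 L1 L2 n1 n2 (e3 L1 L2 n1 n2 c) = (\<lambda>t. if t < n1 * n2 then c t else 0)"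
  by (auto simp: p3_def e3_def fun_eq_iff)

lemma decomp_P:
  assumes "v \<in> carrier_L (prod_gen L1 n1 L2 n2)"
  shows "v = pA L1 v + e2 L1 L2 (proj2 L1 L2 v) + e3 L1 L2 n1 n2 (p3 L1 L2 n1 n2 v)"
  using assms by (auto simp: fun_eq_iff pA_def e2_def proj2_def e3_def p3_def carrier_P_iff)

lemma br_pA: "br L (pA L x) (pA L y) = br L x y"
  by (auto simp: br_def pA_def fun_eq_iff intro!: sum.cong)

lemma br_C1: "br L x y \<in> C1 L"
proof -
  have "br L (pA L x) (pA L y) \<in> C1 L" unfolding C1_def
    by (rule cspan_base) (use pA_carrier in blast)
  then show ?thesis by (simp add: br_pA)
qed

lemma adapted_zero: "adapted L n \<Longrightarrow> v \<in> C1 L \<Longrightarrow> i < n \<Longrightarrow> v i = 0"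
proof -
  assume a: "adapted L n" "v \<in> C1 L" "i < n"
  have "subsp {v. \<forall>i<n. v i = 0}" by (auto simp: subsp_def)
  moreover have "{unitv k |k. n \<le> k \<and> k < ldim L} \<subseteq> {v. \<forall>i<n. v i = 0}" by (auto simp: unitv_def)
  ultimately have "cspan {unitv k |k. n \<le> k \<and> k < ldim L} \<subseteq> {v. \<forall>i<n. v i = 0}" by (rule cspan_least)
  then show ?thesis using a by (auto simp: adapted_def)
qed

lemma Zb_zero1: "(\<And>i. i < n1 \<Longrightarrow> a i = 0) \<Longrightarrow> Zb n1 n2 a b = 0"
  by (auto simp: Zb_def fun_eq_iff less_mult_imp_div_less)
lemma Zb_zero2: "(\<And>j. j < n2 \<Longrightarrow> b j = 0) \<Longrightarrow> Zb n1 n2 a b = 0"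
proof -
  assume h: "\<And>j. j < n2 \<Longrightarrow> b j = 0"
  show ?thesis
  proof (rule ext)
    fix t
    show "Zb n1 n2 a b t = 0 t"
    proof (cases "t < n1 * n2")
      case True
      then have "0 < n2" by (cases n2) auto
      then show ?thesis using h[of "t mod n2"] by (simp add: Zb_def)
    qed (simp add: Zb_def)
  qed
qed
lemma Zb_0l[simp]: "Zb n1 n2 0 b = 0" by (simp add: Zb_def fun_eq_iff)
lemma Zb_0r[simp]: "Zb n1 n2 a 0 = 0" by (simp add: Zb_def fun_eq_iff)

lemma br_P_1:
  assumes "a \<in> carrier_L L1" "b \<in> carrier_L L1" "n1 \<le> ldim L1" "n2 \<le> ldim L2"
  shows "br (prod_gen L1 n1 L2 n2) a b = br L1 a b"
proof (rule ext_P[of _ L1 n1 L2 n2])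
  show "br (prod_gen L1 n1 L2 n2) a b \<in> carrier_L (prod_gen L1 n1 L2 n2)" by (rule br_carrier)
  show "br L1 a b \<in> carrier_L (prod_gen L1 n1 L2 n2)" by (rule carrier1_P[OF br_carrier])
  show "pA L1 (br (prod_gen L1 n1 L2 n2) a b) = pA L1 (br L1 a b)"
    using assms by (simp add: p1_br pA_id br_carrier)
  show "proj2 L1 L2 (br (prod_gen L1 n1 L2 n2) a b) = proj2 L1 L2 (br L1 a b)"
    using assms by (simp add: p2_br proj2_1 br_carrier)
  show "p3 L1 L2 n1 n2 (br (prod_gen L1 n1 L2 n2) a b) = p3 L1 L2 n1 n2 (br L1 a b)"
    using assms by (simp add: p3_br proj2_1 p3_1 br_carrier)
qed

lemma br_P_2:
  assumes "n1 \<le> ldim L1" "n2 \<le> ldim L2"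
  shows "br (prod_gen L1 n1 L2 n2) (e2 L1 L2 a) (e2 L1 L2 b) = e2 L1 L2 (br L2 a b)"
proof (rule ext_P[of _ L1 n1 L2 n2])
  show "br (prod_gen L1 n1 L2 n2) (e2 L1 L2 a) (e2 L1 L2 b) \<in> carrier_L (prod_gen L1 n1 L2 n2)" by (rule br_carrier)
  show "e2 L1 L2 (br L2 a b) \<in> carrier_L (prod_gen L1 n1 L2 n2)" by (rule e2_carrier)
  show "pA L1 (br (prod_gen L1 n1 L2 n2) (e2 L1 L2 a) (e2 L1 L2 b)) = pA L1 (e2 L1 L2 (br L2 a b))"
    by (simp add: p1_br)
  show "proj2 L1 L2 (br (prod_gen L1 n1 L2 n2) (e2 L1 L2 a) (e2 L1 L2 b)) = proj2 L1 L2 (e2 L1 L2 (br L2 a b))"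
    by (simp add: p2_br br_pA pA_id br_carrier)
  show "p3 L1 L2 n1 n2 (br (prod_gen L1 n1 L2 n2) (e2 L1 L2 a) (e2 L1 L2 b)) = p3 L1 L2 n1 n2 (e2 L1 L2 (br L2 a b))"
    using assms by (simp add: p3_br)
qed

lemma unitv_carrier: "k < ldim L \<Longrightarrow> unitv k \<in> carrier_L L"
  by (simp add: unitv_def carrier_L_def)

lemma e3_unit:
  assumes n1: "n1 \<le> ldim L1" and n2: "n2 \<le> ldim L2" and t: "t < n1 * n2"
  shows "e3 L1 L2 n1 n2 (unitv t) = br (prod_gen L1 n1 L2 n2) (unitv (t div n2)) (unitv (ldim L1 + t mod n2))"
proof (rule ext_P[of _ L1 n1 L2 n2])
  let ?P = "prod_gen L1 n1 L2 n2"
  have n2p: "0 < n2" using t by (cases n2) auto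
  have a1: "t div n2 < n1" using t by (simp add: less_mult_imp_div_less)
  have b1: "t mod n2 < n2" using n2p by simp
  show "e3 L1 L2 n1 n2 (unitv t) \<in> carrier_L ?P" by (rule e3_carrier)
  show "br ?P (unitv (t div n2)) (unitv (ldim L1 + t mod n2)) \<in> carrier_L ?P" by (rule br_carrier)
  have pa: "pA L1 (unitv (ldim L1 + t mod n2)) = 0" by (auto simp: pA_def unitv_def fun_eq_iff)
  have pb: "proj2 L1 L2 (unitv (t div n2)) = 0" using a1 n1 by (auto simp: proj2_def unitv_def fun_eq_iff)
  show "pA L1 (e3 L1 L2 n1 n2 (unitv t)) = pA L1 (br ?P (unitv (t div n2)) (unitv (ldim L1 + t mod n2)))"
    by (simp add: p1_br pa)
  show "proj2 L1 L2 (e3 L1 L2 n1 n2 (unitv t)) = proj2 L1 L2 (br ?P (unitv (t div n2)) (unitv (ldim L1 + t mod n2)))"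
    by (simp add: p2_br pb)
  have pa2: "pA L1 (unitv (t div n2)) = unitv (t div n2)" using a1 n1 by (auto simp: pA_def unitv_def fun_eq_iff)
  have pb2: "proj2 L1 L2 (unitv (ldim L1 + t mod n2)) = unitv (t mod n2)" using b1 n2 by (auto simp: proj2_def unitv_def fun_eq_iff)
  have z: "Zb n1 n2 (unitv (t div n2)) (unitv (t mod n2)) = (\<lambda>s. if s < n1 * n2 then unitv t s else 0)"
  proof (rule ext)
    fix s
    have "(s div n2 = t div n2 \<and> s mod n2 = t mod n2) \<longleftrightarrow> s = t"
      by (metis div_mult_mod_eq)
    then show "Zb n1 n2 (unitv (t div n2)) (unitv (t mod n2)) s = (if s < n1 * n2 then unitv t s else 0)"
      by (auto simp: Zb_def unitv_def)
  qed
  show "p3 L1 L2 n1 n2 (e3 L1 L2 n1 n2 (unitv t)) = p3 L1 L2 n1 n2 (br ?P (unitv (t div n2)) (unitv (ldim L1 + t mod n2)))"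
    using n1 n2 by (simp add: p3_br pa pb pa2 pb2 z)
qed

lemma e3_sum: "e3 L1 L2 n1 n2 c = (\<Sum>t<n1 * n2. smul (c t) (e3 L1 L2 n1 n2 (unitv t)))"
proof (rule ext)
  fix k
  show "e3 L1 L2 n1 n2 c k = (\<Sum>t<n1 * n2. smul (c t) (e3 L1 L2 n1 n2 (unitv t))) k"
  proof -
    let ?B = "ldim L1 + ldim L2 \<le> k \<and> k < ldim L1 + ldim L2 + n1 * n2"
    have "(\<Sum>t<n1 * n2. smul (c t) (e3 L1 L2 n1 n2 (unitv t))) k
       = (\<Sum>t<n1 * n2. if k - ldim L1 - ldim L2 = t then (if ?B then c t else 0) else 0)"
      unfolding sum_fun_apply by (intro sum.cong) (auto simp: e3_def unitv_def)
    also have "\<dots> = e3 L1 L2 n1 n2 c k" by (auto simp: e3_def)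
    finally show ?thesis by simp
  qed
qed

lemma e3_C1:
  assumes n1: "n1 \<le> ldim L1" and n2: "n2 \<le> ldim L2"
  shows "e3 L1 L2 n1 n2 c \<in> C1 (prod_gen L1 n1 L2 n2)"
proof -
  have "e3 L1 L2 n1 n2 (unitv t) \<in> C1 (prod_gen L1 n1 L2 n2)" if "t < n1 * n2" for t
    unfolding e3_unit[OF n1 n2 that] by (rule br_C1)
  moreover have s: "subsp (C1 (prod_gen L1 n1 L2 n2))" by (simp add: C1_def subsp_cspan)
  ultimately show ?thesis unfolding e3_sum[of L1 L2 n1 n2 c]
    by (intro subsp_sum[OF s] subsp_smul[OF s]) auto
qed


lemma adapted_le: "adapted L n \<Longrightarrow> n \<le> ldim L" by (simp add: adapted_def)

lemma p3_br2:
  assumes a1: "adapted L1 n1" and a2: "adapted L2 n2"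
  shows "p3 L1 L2 n1 n2 (br (prod_gen L1 n1 L2 n2) x (br (prod_gen L1 n1 L2 n2) y z)) = 0"
proof -
  note n1 = adapted_le[OF a1] and n2 = adapted_le[OF a2]
  let ?P = "prod_gen L1 n1 L2 n2"
  have "Zb n1 n2 (pA L1 x) (br L2 (proj2 L1 L2 y) (proj2 L1 L2 z)) = 0"
    by (rule Zb_zero2, rule adapted_zero[OF a2 br_C1])
  moreover have "Zb n1 n2 (br L1 (pA L1 y) (pA L1 z)) (proj2 L1 L2 x) = 0"
    by (rule Zb_zero1, rule adapted_zero[OF a1 br_C1])
  ultimately show ?thesis using n1 n2 by (simp add: p3_br p1_br p2_br)
qed

lemma lie_P:
  assumes l1: "lie_algebra L1" and l2: "lie_algebra L2" and a1: "adapted L1 n1" and a2: "adapted L2 n2"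
  shows "lie_algebra (prod_gen L1 n1 L2 n2)"
proof -
  note n1 = adapted_le[OF a1] and n2 = adapted_le[OF a2]
  let ?P = "prod_gen L1 n1 L2 n2"
  have z: "0 \<in> carrier_L ?P" by (simp add: carrier_L_def)
  have A: "br ?P x x = 0" if "x \<in> carrier_L ?P" for x
  proof (rule ext_P[of _ L1 n1 L2 n2, OF br_carrier z])
    show "pA L1 (br ?P x x) = pA L1 0" using l1 pA_carrier by (simp add: p1_br lie_algebra_def)
    show "proj2 L1 L2 (br ?P x x) = proj2 L1 L2 0" using l2 proj2_carrier by (simp add: p2_br lie_algebra_def)
    show "p3 L1 L2 n1 n2 (br ?P x x) = p3 L1 L2 n1 n2 0" using n1 n2 by (simp add: p3_br)
  qed
  have B: "br ?P x (br ?P y z) + br ?P y (br ?P z x) + br ?P z (br ?P x y) = 0"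
    if "x \<in> carrier_L ?P" "y \<in> carrier_L ?P" "z \<in> carrier_L ?P" for x y z
  proof (rule ext_P[of _ L1 n1 L2 n2, OF _ z])
    show "br ?P x (br ?P y z) + br ?P y (br ?P z x) + br ?P z (br ?P x y) \<in> carrier_L ?P"
      by (intro subsp_add[OF subsp_carrier] br_carrier)
    show "pA L1 (br ?P x (br ?P y z) + br ?P y (br ?P z x) + br ?P z (br ?P x y)) = pA L1 0"
      using l1 pA_carrier by (simp add: p1_br lie_algebra_def)
    show "proj2 L1 L2 (br ?P x (br ?P y z) + br ?P y (br ?P z x) + br ?P z (br ?P x y)) = proj2 L1 L2 0"
      using l2 proj2_carrier by (simp add: p2_br lie_algebra_def)
    show "p3 L1 L2 n1 n2 (br ?P x (br ?P y z) + br ?P y (br ?P z x) + br ?P z (br ?P x y)) = p3 L1 L2 n1 n2 0"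
      using p3_br2[OF a1 a2] by simp
  qed
  show ?thesis using A B by (simp add: lie_algebra_def)
qed

lemma subsp_zero: "subsp {0}" by (simp add: subsp_def)

lemma lcs_P:
  assumes a1: "adapted L1 n1" and a2: "adapted L2 n2"
  shows "v \<in> lcs (prod_gen L1 n1 L2 n2) k \<Longrightarrow>
    pA L1 v \<in> lcs L1 k \<and> proj2 L1 L2 v \<in> lcs L2 k \<and> (2 \<le> k \<longrightarrow> p3 L1 L2 n1 n2 v = 0)"
proof (induction k arbitrary: v)
  case 0
  then show ?case by (simp add: pA_carrier proj2_carrier)
next
  case (Suc k)
  note n1 = adapted_le[OF a1] and n2 = adapted_le[OF a2]
  let ?P = "prod_gen L1 n1 L2 n2"
  let ?S = "{br ?P x y |x y. x \<in> carrier_L ?P \<and> y \<in> lcs ?P k}"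
  have vS: "v \<in> cspan ?S" using Suc.prems by simp
  have "pA L1 v \<in> lcs L1 (Suc k)"
  proof (rule lin_cspan[OF subsp_UNIV _ _ _ subsp_lcs _ vS, where f = "pA L1"])
    fix u assume "u \<in> ?S"
    then obtain x y where u: "u = br ?P x y" and y: "y \<in> lcs ?P k" by blast
    show "pA L1 u \<in> lcs L1 (Suc k)" unfolding u p1_br
      using lcs_br[OF pA_carrier conjunct1[OF Suc.IH[OF y]]] .
  qed auto
  moreover have "proj2 L1 L2 v \<in> lcs L2 (Suc k)"
  proof (rule lin_cspan[OF subsp_UNIV _ _ _ subsp_lcs _ vS, where f = "proj2 L1 L2"])
    fix u assume "u \<in> ?S"
    then obtain x y where u: "u = br ?P x y" and y: "y \<in> lcs ?P k" by blast
    show "proj2 L1 L2 u \<in> lcs L2 (Suc k)" unfolding u p2_br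
      using lcs_br[OF proj2_carrier conjunct1[OF conjunct2[OF Suc.IH[OF y]]]] .
  qed auto
  moreover have "p3 L1 L2 n1 n2 v = 0" if k2: "2 \<le> Suc k"
  proof -
    have "p3 L1 L2 n1 n2 v \<in> {0}"
    proof (rule lin_cspan[OF subsp_UNIV _ _ _ subsp_zero _ vS, where f = "p3 L1 L2 n1 n2"])
      fix u assume "u \<in> ?S"
      then obtain x y where u: "u = br ?P x y" and y: "y \<in> lcs ?P k" by blast
      have k1: "1 \<le> k" using k2 by simp
      have "pA L1 y \<in> lcs L1 1" using Suc.IH[OF y] lcs_mono[OF k1, of L1] by blast
      then have z1: "Zb n1 n2 (pA L1 y) (proj2 L1 L2 x) = 0"
        by (intro Zb_zero1 adapted_zero[OF a1]) (simp add: C1_lcs)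
      have "proj2 L1 L2 y \<in> lcs L2 1" using Suc.IH[OF y] lcs_mono[OF k1, of L2] by blast
      then have z2: "Zb n1 n2 (pA L1 x) (proj2 L1 L2 y) = 0"
        by (intro Zb_zero2 adapted_zero[OF a2]) (simp add: C1_lcs)
      show "p3 L1 L2 n1 n2 u \<in> {0}" unfolding u using n1 n2 z1 z2 by (simp add: p3_br)
    qed auto
    then show ?thesis by simp
  qed
  ultimately show ?case by blast
qed

lemma nilp_P:
  assumes a1: "adapted L1 n1" and a2: "adapted L2 n2"
    and N1: "nilpotent_L L1" and N2: "nilpotent_L L2"
  shows "nilpotent_L (prod_gen L1 n1 L2 n2)"
proof -
  let ?P = "prod_gen L1 n1 L2 n2"
  obtain K1 where K1: "lcs L1 K1 = {0}" using N1 by (auto simp: nilpotent_L_def)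
  obtain K2 where K2: "lcs L2 K2 = {0}" using N2 by (auto simp: nilpotent_L_def)
  define K where "K = K1 + K2 + 2"
  have z: "0 \<in> carrier_L ?P" by (simp add: carrier_L_def)
  have "v = 0" if v: "v \<in> lcs ?P K" for v
  proof (rule ext_P[of _ L1 n1 L2 n2, OF _ z])
    show "v \<in> carrier_L ?P" using v lcs_carrier by blast
    have "pA L1 v \<in> lcs L1 K1" using lcs_P[OF a1 a2 v] lcs_mono[of K1 K L1] by (auto simp: K_def)
    then show "pA L1 v = pA L1 0" using K1 by simp
    have "proj2 L1 L2 v \<in> lcs L2 K2" using lcs_P[OF a1 a2 v] lcs_mono[of K2 K L2] by (auto simp: K_def)
    then show "proj2 L1 L2 v = proj2 L1 L2 0" using K2 by simp
    show "p3 L1 L2 n1 n2 v = p3 L1 L2 n1 n2 0" using lcs_P[OF a1 a2 v] by (simp add: K_def)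
  qed
  then have "lcs ?P K = {0}" using subsp_0[OF subsp_lcs, of ?P K] by blast
  then show ?thesis by (auto simp: nilpotent_L_def)
qed


definition Tr :: "nat \<Rightarrow> nat \<Rightarrow> vec \<Rightarrow> vec" where
  "Tr n1 n2 c = (\<lambda>t. if t < n1 * n2 then c ((t mod n2) * n1 + t div n2) else 0)"

definition swp :: "lie_sc \<Rightarrow> nat \<Rightarrow> lie_sc \<Rightarrow> nat \<Rightarrow> vec \<Rightarrow> vec" where
  "swp L1 n1 L2 n2 v = (\<lambda>k. if k < ldim L1 then v (ldim L2 + k)
     else if k < ldim L1 + ldim L2 then v (k - ldim L1)
     else if k < ldim L1 + ldim L2 + n1 * n2
       then - v (ldim L2 + ldim L1 + (((k - ldim L1 - ldim L2) mod n2) * n1 + (k - ldim L1 - ldim L2) div n2))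
     else 0)"

lemma idx_lt:
  fixes t n1 n2 :: nat
  assumes "t < n1 * n2"
  shows "(t mod n2) * n1 + t div n2 < n2 * n1"
proof -
  have n2p: "0 < n2" using assms by (cases n2) auto
  have a: "t div n2 < n1" using assms by (simp add: less_mult_imp_div_less)
  have b: "t mod n2 < n2" using n2p by simp
  then have "t mod n2 + 1 \<le> n2" by simp
  then have "(t mod n2 + 1) * n1 \<le> n2 * n1" by (rule mult_right_mono) simp
  then show ?thesis using a by (simp add: algebra_simps)
qed

lemma idx_div: fixes t n1 n2 :: nat assumes "t < n1 * n2"
  shows "((t mod n2) * n1 + t div n2) div n1 = t mod n2" "((t mod n2) * n1 + t div n2) mod n1 = t div n2"
proof -
  have a: "t div n2 < n1" using assms by (simp add: less_mult_imp_div_less)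
  show "((t mod n2) * n1 + t div n2) div n1 = t mod n2" using a by simp
  show "((t mod n2) * n1 + t div n2) mod n1 = t div n2" using a by simp
qed

lemma swp_carrier: "swp L1 n1 L2 n2 v \<in> carrier_L (prod_gen L1 n1 L2 n2)"
  by (simp add: carrier_P_iff swp_def)

lemma pA_swp[simp]: "pA L1 (swp L1 n1 L2 n2 v) = proj2 L2 L1 v"
  by (auto simp: fun_eq_iff pA_def proj2_def swp_def)
lemma proj2_swp[simp]: "proj2 L1 L2 (swp L1 n1 L2 n2 v) = pA L2 v"
  by (auto simp: fun_eq_iff pA_def proj2_def swp_def)
lemma p3_swp[simp]: "p3 L1 L2 n1 n2 (swp L1 n1 L2 n2 v) = - Tr n1 n2 (p3 L2 L1 n2 n1 v)"
proof (rule ext)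
  fix t
  show "p3 L1 L2 n1 n2 (swp L1 n1 L2 n2 v) t = (- Tr n1 n2 (p3 L2 L1 n2 n1 v)) t"
  proof (cases "t < n1 * n2")
    case True
    then show ?thesis using idx_lt[OF True] by (simp add: p3_def Tr_def swp_def)
  qed (simp add: p3_def Tr_def)
qed

lemma swp_add[simp]: "swp L1 n1 L2 n2 (x + y) = swp L1 n1 L2 n2 x + swp L1 n1 L2 n2 y"
  by (auto simp: fun_eq_iff swp_def)
lemma swp_smul[simp]: "swp L1 n1 L2 n2 (smul a x) = smul a (swp L1 n1 L2 n2 x)"
  by (auto simp: fun_eq_iff swp_def)

lemma Tr_Zb: "Tr n1 n2 (Zb n2 n1 a b) = Zb n1 n2 b a"
proof (rule ext)
  fix t
  show "Tr n1 n2 (Zb n2 n1 a b) t = Zb n1 n2 b a t"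
  proof (cases "t < n1 * n2")
    case True
    then show ?thesis using idx_lt[OF True] idx_div[OF True] by (simp add: Tr_def Zb_def mult.commute)
  qed (simp add: Tr_def Zb_def)
qed

lemma Tr_diff: "Tr n1 n2 (c - d) = Tr n1 n2 c - Tr n1 n2 d"
  by (auto simp: Tr_def fun_eq_iff)
lemma Tr_neg: "Tr n1 n2 (- c) = - Tr n1 n2 c"
  by (auto simp: Tr_def fun_eq_iff)

lemma Tr_Tr:
  assumes "\<And>s. n2 * n1 \<le> s \<Longrightarrow> c s = 0"
  shows "Tr n2 n1 (Tr n1 n2 c) = c"
proof (rule ext)
  fix s
  show "Tr n2 n1 (Tr n1 n2 c) s = c s"
  proof (cases "s < n2 * n1")
    case True
    define u where "u = (s mod n1) * n2 + s div n1"
    have u1: "u < n1 * n2" using idx_lt[OF True] by (simp add: u_def)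
    have u2: "u mod n2 = s div n1" "u div n2 = s mod n1" using idx_div[OF True] by (simp_all add: u_def)
    have "(u mod n2) * n1 + u div n2 = s" unfolding u2 by (metis div_mult_mod_eq)
    then show ?thesis using True u1 by (simp add: Tr_def u_def[symmetric])
  next
    case False
    then show ?thesis using assms by (simp add: Tr_def)
  qed
qed

lemma swp_br:
  assumes n1: "n1 \<le> ldim L1" and n2: "n2 \<le> ldim L2"
  shows "swp L1 n1 L2 n2 (br (prod_gen L2 n2 L1 n1) x y)
    = br (prod_gen L1 n1 L2 n2) (swp L1 n1 L2 n2 x) (swp L1 n1 L2 n2 y)"
proof (rule ext_P[of _ L1 n1 L2 n2, OF swp_carrier br_carrier])
  let ?s = "swp L1 n1 L2 n2"
  let ?P = "prod_gen L1 n1 L2 n2"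
  let ?Q = "prod_gen L2 n2 L1 n1"
  show "pA L1 (?s (br ?Q x y)) = pA L1 (br ?P (?s x) (?s y))" by (simp add: p1_br p2_br)
  show "proj2 L1 L2 (?s (br ?Q x y)) = proj2 L1 L2 (br ?P (?s x) (?s y))" by (simp add: p1_br p2_br)
  show "p3 L1 L2 n1 n2 (?s (br ?Q x y)) = p3 L1 L2 n1 n2 (br ?P (?s x) (?s y))"
    using n1 n2 by (simp add: p3_br Tr_diff Tr_Zb)
qed

lemma swp_inv:
  assumes "v \<in> carrier_L (prod_gen L2 n2 L1 n1)"
  shows "swp L2 n2 L1 n1 (swp L1 n1 L2 n2 v) = v"
proof (rule ext_P[of _ L2 n2 L1 n1, OF swp_carrier assms])
  show "pA L2 (swp L2 n2 L1 n1 (swp L1 n1 L2 n2 v)) = pA L2 v" by simp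
  show "proj2 L2 L1 (swp L2 n2 L1 n1 (swp L1 n1 L2 n2 v)) = proj2 L2 L1 v" by simp
  have "\<And>s. n2 * n1 \<le> s \<Longrightarrow> p3 L2 L1 n2 n1 v s = 0" by (simp add: p3_def)
  then show "p3 L2 L1 n2 n1 (swp L2 n2 L1 n1 (swp L1 n1 L2 n2 v)) = p3 L2 L1 n2 n1 v"
    by (simp add: Tr_neg Tr_Tr)
qed

lemma swp_e2: "b \<in> carrier_L L2 \<Longrightarrow> swp L1 n1 L2 n2 b = e2 L1 L2 b"
  by (auto simp: fun_eq_iff swp_def e2_def carrier_L_def)

lemma deriv_swap:
  assumes n1: "n1 \<le> ldim L1" and n2: "n2 \<le> ldim L2" and D: "derivation (prod_gen L1 n1 L2 n2) D"
  shows "derivation (prod_gen L2 n2 L1 n1) (\<lambda>v. swp L2 n2 L1 n1 (D (swp L1 n1 L2 n2 v)))"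
proof -
  let ?s = "swp L1 n1 L2 n2"
  let ?t = "swp L2 n2 L1 n1"
  let ?P = "prod_gen L1 n1 L2 n2"
  let ?Q = "prod_gen L2 n2 L1 n1"
  have Dadd: "D (x + y) = D x + D y" if "x \<in> carrier_L ?P" "y \<in> carrier_L ?P" for x y
    using D that by (simp add: derivation_def)
  have Dsm: "D (smul a x) = smul a (D x)" if "x \<in> carrier_L ?P" for a x
    using D that by (simp add: derivation_def)
  have Dbr: "D (br ?P x y) = br ?P (D x) y + br ?P x (D y)" if "x \<in> carrier_L ?P" "y \<in> carrier_L ?P" for x y
    using D that by (simp add: derivation_def)
  have Dc: "D x \<in> carrier_L ?P" if "x \<in> carrier_L ?P" for x
    using D that by (simp add: derivation_def)
  show ?thesis unfolding derivation_def
  proof (intro conjI ballI allI)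
    fix x show "?t (D (?s x)) \<in> carrier_L ?Q" by (rule swp_carrier)
  next
    fix x y assume "x \<in> carrier_L ?Q" "y \<in> carrier_L ?Q"
    show "?t (D (?s (x + y))) = ?t (D (?s x)) + ?t (D (?s y))"
      by (simp add: Dadd swp_carrier)
  next
    fix a x assume "x \<in> carrier_L ?Q"
    show "?t (D (?s (smul a x))) = smul a (?t (D (?s x)))"
      by (simp add: Dsm swp_carrier)
  next
    fix x y assume x: "x \<in> carrier_L ?Q" and y: "y \<in> carrier_L ?Q"
    have "?t (D (?s (br ?Q x y))) = ?t (D (br ?P (?s x) (?s y)))" by (simp add: swp_br[OF n1 n2])
    also have "\<dots> = ?t (br ?P (D (?s x)) (?s y) + br ?P (?s x) (D (?s y)))" by (simp add: Dbr swp_carrier)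
    also have "\<dots> = br ?Q (?t (D (?s x))) (?t (?s y)) + br ?Q (?t (?s x)) (?t (D (?s y)))"
      by (simp add: swp_br[OF n2 n1])
    also have "\<dots> = br ?Q (?t (D (?s x))) y + br ?Q x (?t (D (?s y)))" by (simp add: swp_inv x y)
    finally show "?t (D (?s (br ?Q x y))) = br ?Q (?t (D (?s x))) y + br ?Q x (?t (D (?s y)))" .
  qed
qed


lemma D_C1:
  assumes "nna_lie L1" and "nna_lie L2"
    and a1: "adapted L1 n1" and a2: "adapted L2 n2"
    and S1: "S_algebra L1 n1" and S2: "S_algebra L2 n2"
    and h1: "\<forall>f. derivation L1 f \<longrightarrow> f ` carrier_L L1 \<subseteq> C1 L1"
    and h2: "\<forall>f. derivation L2 f \<longrightarrow> f ` carrier_L L2 \<subseteq> C1 L2"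
    and D: "derivation (prod_gen L1 n1 L2 n2) D"
    and v: "v \<in> carrier_L (prod_gen L1 n1 L2 n2)"
  shows "D v \<in> C1 (prod_gen L1 n1 L2 n2)"
proof -
  note n1 = adapted_le[OF a1] and n2 = adapted_le[OF a2]
  let ?P = "prod_gen L1 n1 L2 n2"
  have Dadd: "D (x + y) = D x + D y" if "x \<in> carrier_L ?P" "y \<in> carrier_L ?P" for x y
    using D that by (simp add: derivation_def)
  have Dsm: "D (smul a x) = smul a (D x)" if "x \<in> carrier_L ?P" for a x
    using D that by (simp add: derivation_def)
  have Dbr: "D (br ?P x y) = br ?P (D x) y + br ?P x (D y)" if "x \<in> carrier_L ?P" "y \<in> carrier_L ?P" for x y
    using D that by (simp add: derivation_def)
  have Dc: "D x \<in> carrier_L ?P" if "x \<in> carrier_L ?P" for x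
    using D that by (simp add: derivation_def)
  have sC1: "subsp (C1 L)" for L by (simp add: C1_def subsp_cspan)
  have f1: "derivation L1 (\<lambda>a. pA L1 (D a))"
    unfolding derivation_def
  proof (intro conjI ballI allI)
    fix x show "pA L1 (D x) \<in> carrier_L L1" by (rule pA_carrier)
  next
    fix x y assume "x \<in> carrier_L L1" "y \<in> carrier_L L1"
    then show "pA L1 (D (x + y)) = pA L1 (D x) + pA L1 (D y)" by (simp add: Dadd carrier1_P)
  next
    fix a x assume "x \<in> carrier_L L1"
    then show "pA L1 (D (smul a x)) = smul a (pA L1 (D x))" by (simp add: Dsm carrier1_P)
  next
    fix x y assume x: "x \<in> carrier_L L1" and y: "y \<in> carrier_L L1"
    have "pA L1 (D (br L1 x y)) = pA L1 (D (br ?P x y))" using br_P_1[OF x y n1 n2] by simp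
    also have "\<dots> = br L1 (pA L1 (D x)) y + br L1 x (pA L1 (D y))"
      using x y by (simp add: Dbr carrier1_P p1_br pA_id)
    finally show "pA L1 (D (br L1 x y)) = br L1 (pA L1 (D x)) y + br L1 x (pA L1 (D y))" .
  qed
  have f2: "derivation L2 (\<lambda>b. proj2 L1 L2 (D (e2 L1 L2 b)))"
    unfolding derivation_def
  proof (intro conjI ballI allI)
    fix x show "proj2 L1 L2 (D (e2 L1 L2 x)) \<in> carrier_L L2" by (rule proj2_carrier)
  next
    fix x y assume "x \<in> carrier_L L2" "y \<in> carrier_L L2"
    then show "proj2 L1 L2 (D (e2 L1 L2 (x + y))) = proj2 L1 L2 (D (e2 L1 L2 x)) + proj2 L1 L2 (D (e2 L1 L2 y))"
      by (simp add: Dadd e2_carrier)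
  next
    fix a x assume "x \<in> carrier_L L2"
    then show "proj2 L1 L2 (D (e2 L1 L2 (smul a x))) = smul a (proj2 L1 L2 (D (e2 L1 L2 x)))"
      by (simp add: Dsm e2_carrier)
  next
    fix x y assume x: "x \<in> carrier_L L2" and y: "y \<in> carrier_L L2"
    have "proj2 L1 L2 (D (e2 L1 L2 (br L2 x y))) = proj2 L1 L2 (D (br ?P (e2 L1 L2 x) (e2 L1 L2 y)))"
      using br_P_2[OF n1 n2] by simp
    also have "\<dots> = br L2 (proj2 L1 L2 (D (e2 L1 L2 x))) y + br L2 x (proj2 L1 L2 (D (e2 L1 L2 y)))"
      using x y by (simp add: Dbr e2_carrier p2_br pA_id)
    finally show "proj2 L1 L2 (D (e2 L1 L2 (br L2 x y))) = br L2 (proj2 L1 L2 (D (e2 L1 L2 x))) y + br L2 x (proj2 L1 L2 (D (e2 L1 L2 y)))" .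
  qed
  have DC1: "D w \<in> C1 ?P" if w: "w \<in> C1 ?P" for w
  proof (rule lin_cspan[OF subsp_carrier _ _ _ sC1 _ w[unfolded C1_def], where f = D])
    show "{br ?P x y |x y. x \<in> carrier_L ?P \<and> y \<in> carrier_L ?P} \<subseteq> carrier_L ?P"
      using br_carrier by blast
  next
    fix u assume "u \<in> {br ?P x y |x y. x \<in> carrier_L ?P \<and> y \<in> carrier_L ?P}"
    then obtain x y where u: "u = br ?P x y" "x \<in> carrier_L ?P" "y \<in> carrier_L ?P" by blast
    show "D u \<in> C1 ?P" unfolding u(1) Dbr[OF u(2,3)] by (intro subsp_add[OF sC1] br_C1)
  qed (auto simp: Dadd Dsm)
  have pC1: "pA L1 w \<in> C1 L1" if w: "w \<in> C1 ?P" for w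
  proof (rule lin_cspan[OF subsp_UNIV _ _ _ sC1 _ w[unfolded C1_def], where f = "pA L1"])
    fix u assume "u \<in> {br ?P x y |x y. x \<in> carrier_L ?P \<and> y \<in> carrier_L ?P}"
    then obtain x y where u: "u = br ?P x y" by blast
    show "pA L1 u \<in> C1 L1" unfolding u p1_br by (rule br_C1)
  qed auto
  have qC1: "proj2 L1 L2 w \<in> C1 L2" if w: "w \<in> C1 ?P" for w
  proof (rule lin_cspan[OF subsp_UNIV _ _ _ sC1 _ w[unfolded C1_def], where f = "proj2 L1 L2"])
    fix u assume "u \<in> {br ?P x y |x y. x \<in> carrier_L ?P \<and> y \<in> carrier_L ?P}"
    then obtain x y where u: "u = br ?P x y" by blast
    show "proj2 L1 L2 u \<in> C1 L2" unfolding u p2_br by (rule br_C1)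
  qed auto
  have C1_1: "w \<in> C1 ?P" if w: "w \<in> C1 L1" for w
  proof (rule lin_cspan[OF subsp_UNIV _ _ _ sC1 _ w[unfolded C1_def], where f = "\<lambda>x. x"])
    fix u assume "u \<in> {br L1 x y |x y. x \<in> carrier_L L1 \<and> y \<in> carrier_L L1}"
    then obtain x y where u: "u = br L1 x y" "x \<in> carrier_L L1" "y \<in> carrier_L L1" by blast
    show "u \<in> C1 ?P" unfolding u(1) br_P_1[OF u(2,3) n1 n2, symmetric] by (rule br_C1)
  qed auto
  have C1_2: "e2 L1 L2 w \<in> C1 ?P" if w: "w \<in> C1 L2" for w
  proof (rule lin_cspan[OF subsp_UNIV _ _ _ sC1 _ w[unfolded C1_def], where f = "e2 L1 L2"])
    fix u assume "u \<in> {br L2 x y |x y. x \<in> carrier_L L2 \<and> y \<in> carrier_L L2}"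
    then obtain x y where u: "u = br L2 x y" by blast
    show "e2 L1 L2 u \<in> C1 ?P" unfolding u br_P_2[OF n1 n2, symmetric] by (rule br_C1)
  qed auto
  have sw: "pA L1 (D (e2 L1 L2 b)) \<in> C1 L1" if b: "b \<in> carrier_L L2" for b
  proof -
    have D': "derivation (prod_gen L2 n2 L1 n1) (\<lambda>v. swp L2 n2 L1 n1 (D (swp L1 n1 L2 n2 v)))"
      by (rule deriv_swap[OF n1 n2 D])
    from S2 \<open>nna_lie L1\<close> a1 D' b
    have "proj2 L2 L1 (swp L2 n2 L1 n1 (D (swp L1 n1 L2 n2 b))) \<in> C1 L1"
      unfolding S_algebra_def by blast
    then show ?thesis using swp_e2[OF b, of L1 n1 n2] by simp
  qed
  define a where "a = pA L1 v"
  define e where "e = e2 L1 L2 (proj2 L1 L2 v)"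
  define z where "z = e3 L1 L2 n1 n2 (p3 L1 L2 n1 n2 v)"
  have ac: "a \<in> carrier_L L1" by (simp add: a_def pA_carrier)
  have aP: "a \<in> carrier_L ?P" by (rule carrier1_P[OF ac])
  have eP: "e \<in> carrier_L ?P" by (simp add: e_def e2_carrier)
  have zP: "z \<in> carrier_L ?P" by (simp add: z_def e3_carrier)
  have zC: "z \<in> C1 ?P" by (simp add: z_def e3_C1[OF n1 n2])
  have ezP: "e + z \<in> carrier_L ?P" by (rule subsp_add[OF subsp_carrier eP zP])
  have vd: "v = a + (e + z)" using decomp_P[OF v] by (simp add: a_def e_def z_def add.assoc)
  have Dv: "D v = D a + (D e + D z)" unfolding vd by (simp add: Dadd aP eP zP ezP)
  have "pA L1 (D a) \<in> C1 L1" using h1 f1 ac by blast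
  moreover have "pA L1 (D e) \<in> C1 L1" unfolding e_def by (rule sw[OF proj2_carrier])
  moreover have "pA L1 (D z) \<in> C1 L1" by (rule pC1[OF DC1[OF zC]])
  ultimately have p1: "pA L1 (D v) \<in> C1 L1" unfolding Dv by (simp add: subsp_add[OF sC1])
  have "proj2 L1 L2 (D a) \<in> C1 L2" using S1 ac unfolding S_algebra_def using \<open>nna_lie L2\<close> a2 D by blast
  moreover have "proj2 L1 L2 (D e) \<in> C1 L2" using h2 f2 proj2_carrier unfolding e_def by blast
  moreover have "proj2 L1 L2 (D z) \<in> C1 L2" by (rule qC1[OF DC1[OF zC]])
  ultimately have p2: "proj2 L1 L2 (D v) \<in> C1 L2" unfolding Dv by (simp add: subsp_add[OF sC1])
  have "D v = pA L1 (D v) + e2 L1 L2 (proj2 L1 L2 (D v)) + e3 L1 L2 n1 n2 (p3 L1 L2 n1 n2 (D v))"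
    by (rule decomp_P[OF Dc[OF v]])
  also have "\<dots> \<in> C1 ?P"
    by (intro subsp_add[OF sC1] C1_1[OF p1] C1_2[OF p2] e3_C1[OF n1 n2])
  finally show ?thesis .
qed

theorem mainTheorem12:
  fixes L1 L2 :: lie_sc and n1 n2 :: nat
  assumes "nna_lie L1" and "nna_lie L2"
    and "adapted L1 n1" and "adapted L2 n2"
    and "S_algebra L1 n1" and "S_algebra L2 n2"
    and "\<forall>f. derivation L1 f \<longrightarrow> f ` carrier_L L1 \<subseteq> C1 L1"
    and "\<forall>f. derivation L2 f \<longrightarrow> f ` carrier_L L2 \<subseteq> C1 L2"
  shows "char_nilpotent (prod_gen L1 n1 L2 n2)
    \<and> (\<forall>D. derivation (prod_gen L1 n1 L2 n2) D \<longrightarrow>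
           D ` carrier_L (prod_gen L1 n1 L2 n2) \<subseteq> C1 (prod_gen L1 n1 L2 n2))"
proof -
  have all: "\<And>D. derivation (prod_gen L1 n1 L2 n2) D \<Longrightarrow>
           D ` carrier_L (prod_gen L1 n1 L2 n2) \<subseteq> C1 (prod_gen L1 n1 L2 n2)"
    using D_C1[OF assms] by blast
  have lie: "lie_algebra (prod_gen L1 n1 L2 n2)"
    using assms(1-4) by (intro lie_P) (auto simp: nna_lie_def)
  have nil: "nilpotent_L (prod_gen L1 n1 L2 n2)"
    using assms(1-4) by (intro nilp_P) (auto simp: nna_lie_def)
  show ?thesis using char_nilp_crit[OF lie nil all] all by blast
qed


end
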